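(* Let $R$ be Rado's poset. Then $AM_2(R(2))$ is well-quasi-ordered but not $\omega^2$-bqo.
   Context: Rado's poset $R$ has underlying set $V=\{(m,n)\in\mathbb{N}^2: m<n\}$ with $(m,n)\leq_R(m',n')$ iff either ($m=m'$ and $n\leq n'$) or $n<m'$. For a poset $P$, $P(2)$ is the set $P\times\{0,1\}$ with the order: $(x,i)\leq(y,j)$ iff either ($i=j$ and $x\leq y$), or ($i=0$, $j=1$, and there exist incomparable $x',y'\in P$ with $x\leq x'$ and $y'\leq y$). $AM_2(Q)$ is the set of two-element maximal antichains of $Q$ ordered by domination ($X\leq Y$ iff each $x\in X$ is below some $y\in Y$). Well-quasi-ordered: well-founded with no infinite antichain. Barriers and $\alpha$-bqo: finite subsets of $\mathbb{N}$ are identified with their increasing enumerations; $s\triangleleft t$ means there is a finite $r\subseteq\mathbb{N}$ with $s$ a proper initial segment of $r$ and $t$ equal to $r$ minus its least element. A barrier is an infinite set $B$ of finite subsets of $\mathbb{N}$, no member a proper subset of another, such that every infinite $X\subseteq\bigcup B$ has a nonempty initial segment in $B$; its order type is that of $B$ under the lexicographic order. A map $f$ from a barrier into a quasi-order $Q$ is good if $f(s)\leq f(t)$ for some $s\triangleleft t$; $Q$ is $\alpha$-bqo if every map from a barrier of order type at most $\alpha$ into $Q$ is good. *)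

theory Defs
  imports Main
begin

definition incomparable :: "('a \<Rightarrow> 'a \<Rightarrow> bool) \<Rightarrow> 'a \<Rightarrow> 'a \<Rightarrow> bool" where
  "incomparable le x y \<longleftrightarrow> \<not> le x y \<and> \<not> le y x"

definition wqo_on :: "'a set \<Rightarrow> ('a \<Rightarrow> 'a \<Rightarrow> bool) \<Rightarrow> bool" where
  "wqo_on C le \<longleftrightarrow>
     \<not> (\<exists>s::nat \<Rightarrow> 'a. \<forall>n. s n \<in> C \<and> le (s (Suc n)) (s n) \<and> \<not> le (s n) (s (Suc n)))
   \<and> \<not> (\<exists>A. A \<subseteq> C \<and> infinite A \<and> (\<forall>x\<in>A. \<forall>y\<in>A. x \<noteq> y \<longrightarrow> incomparable le x y))"

definition rado_set :: "(nat \<times> nat) set" where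
  "rado_set = {(m, n). m < n}"

definition rado_le :: "nat \<times> nat \<Rightarrow> nat \<times> nat \<Rightarrow> bool" where
  "rado_le p q \<longleftrightarrow> (fst p = fst q \<and> snd p \<le> snd q) \<or> snd p < fst q"

definition two_set :: "'a set \<Rightarrow> ('a \<times> nat) set" where
  "two_set P = P \<times> {0, 1}"

definition two_le :: "'a set \<Rightarrow> ('a \<Rightarrow> 'a \<Rightarrow> bool) \<Rightarrow> 'a \<times> nat \<Rightarrow> 'a \<times> nat \<Rightarrow> bool" where
  "two_le P le p q \<longleftrightarrow>
     (snd p = snd q \<and> le (fst p) (fst q)) \<or>
     (snd p = 0 \<and> snd q = 1 \<and>
        (\<exists>x'\<in>P. \<exists>y'\<in>P. incomparable le x' y' \<and> le (fst p) x' \<and> le y' (fst q)))"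

definition am2_set :: "'a set \<Rightarrow> ('a \<Rightarrow> 'a \<Rightarrow> bool) \<Rightarrow> 'a set set" where
  "am2_set Q le = {X. X \<subseteq> Q \<and> card X = 2
       \<and> (\<forall>x\<in>X. \<forall>y\<in>X. x \<noteq> y \<longrightarrow> incomparable le x y)
       \<and> (\<forall>Y. X \<subseteq> Y \<and> Y \<subseteq> Q \<and> (\<forall>x\<in>Y. \<forall>y\<in>Y. x \<noteq> y \<longrightarrow> incomparable le x y) \<longrightarrow> Y = X)}"

definition dom_le :: "('a \<Rightarrow> 'a \<Rightarrow> bool) \<Rightarrow> 'a set \<Rightarrow> 'a set \<Rightarrow> bool" where
  "dom_le le X Y \<longleftrightarrow> (\<forall>x\<in>X. \<exists>y\<in>Y. le x y)"

definition init_seg :: "nat set \<Rightarrow> nat set \<Rightarrow> bool" where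
  "init_seg s r \<longleftrightarrow> s \<subseteq> r \<and> (\<forall>y\<in>s. \<forall>x\<in>r. x \<le> y \<longrightarrow> x \<in> s)"

definition barrier :: "nat set set \<Rightarrow> bool" where
  "barrier B \<longleftrightarrow> infinite B \<and> (\<forall>s\<in>B. finite s)
     \<and> (\<forall>s\<in>B. \<forall>t\<in>B. \<not> (s \<subset> t))
     \<and> (\<forall>X. X \<subseteq> \<Union>B \<and> infinite X \<longrightarrow> (\<exists>s\<in>B. s \<noteq> {} \<and> init_seg s X))"

definition tri_less :: "nat set \<Rightarrow> nat set \<Rightarrow> bool" where
  "tri_less s t \<longleftrightarrow> (\<exists>r. finite r \<and> init_seg s r \<and> s \<noteq> r \<and> t = r - {Min r})"

definition lex_less :: "nat set \<Rightarrow> nat set \<Rightarrow> bool" where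
  "lex_less s t \<longleftrightarrow>
     (sorted_list_of_set s, sorted_list_of_set t) \<in> lexord {(a, b). a < b}"

definition omega2_less :: "nat \<times> nat \<Rightarrow> nat \<times> nat \<Rightarrow> bool" where
  "omega2_less p q \<longleftrightarrow> fst p < fst q \<or> (fst p = fst q \<and> snd p < snd q)"

definition otype_le_omega2 :: "nat set set \<Rightarrow> bool" where
  "otype_le_omega2 B \<longleftrightarrow>
     (\<exists>g. \<forall>s\<in>B. \<forall>t\<in>B. lex_less s t \<longrightarrow> omega2_less (g s) (g t))"

definition good :: "('a \<Rightarrow> 'a \<Rightarrow> bool) \<Rightarrow> nat set set \<Rightarrow> (nat set \<Rightarrow> 'a) \<Rightarrow> bool" where
  "good le B f \<longleftrightarrow> (\<exists>s\<in>B. \<exists>t\<in>B. tri_less s t \<and> le (f s) (f t))"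

definition omega2_bqo :: "'a set \<Rightarrow> ('a \<Rightarrow> 'a \<Rightarrow> bool) \<Rightarrow> bool" where
  "omega2_bqo Q le \<longleftrightarrow>
     (\<forall>B f. barrier B \<and> otype_le_omega2 B \<and> (\<forall>s\<in>B. f s \<in> Q) \<longrightarrow> good le B f)"

end

theory Submission
  imports Defs "HOL-Library.Infinite_Set"
begin

lemma rado_refl: "rado_le x x" by (simp add: rado_le_def)

lemma rado_trans: "q \<in> rado_set \<Longrightarrow> rado_le p q \<Longrightarrow> rado_le q r \<Longrightarrow> rado_le p r"
  by (cases p; cases q; cases r) (auto simp: rado_le_def rado_set_def)

lemma inc_iff: "x \<in> rado_set \<Longrightarrow> y \<in> rado_set \<Longrightarrow> incomparable rado_le x y \<longleftrightarrow>
   (fst x < fst y \<and> fst y \<le> snd x) \<or> (fst y < fst x \<and> fst x \<le> snd y)"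
  by (cases x; cases y) (auto simp: rado_le_def rado_set_def incomparable_def)

lemma inc_neq: "incomparable rado_le x y \<Longrightarrow> x \<noteq> y"
  by (auto simp: incomparable_def rado_refl)

lemma two_same: "two_le P le (x,i) (y,i) \<longleftrightarrow> le x y"
  by (auto simp: two_le_def)

lemma two_10: "\<not> two_le P le (x,1) (y,0)"
  by (auto simp: two_le_def)

lemma L: assumes "x \<in> rado_set" "y \<in> rado_set"
  shows "two_le rado_set rado_le (x,0) (y,1) \<longleftrightarrow> \<not> rado_le y x"
proof
  assume "two_le rado_set rado_le (x,0) (y,1)"
  then obtain x' y' where xy: "x' \<in> rado_set" "y' \<in> rado_set" "incomparable rado_le x' y'"
     "rado_le x x'" "rado_le y' y" by (auto simp: two_le_def)
  show "\<not> rado_le y x"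
  proof
    assume "rado_le y x"
    then have "rado_le y' x" using rado_trans xy assms by blast
    then have "rado_le y' x'" using rado_trans xy assms by blast
    then show False using xy by (auto simp: incomparable_def)
  qed
next
  assume n: "\<not> rado_le y x"
  obtain a b where x: "x = (a,b)" by force
  obtain c d where y: "y = (c,d)" by force
  have ab: "a < b" "c < d" using assms x y by (auto simp: rado_set_def)
  have "\<exists>x'\<in>rado_set. \<exists>y'\<in>rado_set. incomparable rado_le x' y' \<and> rado_le x x' \<and> rado_le y' y"
  proof (cases "a < c")
    case True
    show ?thesis
      by (rule bexI[of _ "(a, max b c)"], rule bexI[of _ "(c, c+1)"])
         (use True ab in \<open>auto simp: x y rado_le_def rado_set_def incomparable_def\<close>)
  next
    case False
    show ?thesis
    proof (cases "a = c")
      case True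
      then have "b < d" using n x y by (auto simp: rado_le_def)
      then show ?thesis
        by (intro bexI[of _ "(b+1, b+2)"] bexI[of _ "(a, d)"])
           (use True ab in \<open>auto simp: x y rado_le_def rado_set_def incomparable_def\<close>)
    next
      case F2: False
      then have "a \<le> d" using n x y False by (auto simp: rado_le_def)
      then show ?thesis
        by (intro bexI[of _ "(a, b)"] bexI[of _ "(c, d)"])
           (use False F2 ab in \<open>auto simp: x y rado_le_def rado_set_def incomparable_def\<close>)
    qed
  qed
  then show "two_le rado_set rado_le (x,0) (y,1)" by (simp add: two_le_def)
qed

abbreviation "TT \<equiv> two_le rado_set rado_le"
abbreviation "Q2 \<equiv> two_set rado_set"

lemma Q2_iff: "(x,i) \<in> Q2 \<longleftrightarrow> x \<in> rado_set \<and> (i = 0 \<or> i = 1)"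
  by (auto simp: two_set_def)

lemma inc_same: "incomparable TT (x,i) (y,i) \<longleftrightarrow> incomparable rado_le x y"
  by (simp add: incomparable_def two_same)

lemma caseA:
  fixes a b c e :: nat
  assumes "a < c" "c \<le> b" "a < b" "c < e"
    and no: "\<forall>z\<in>rado_set. \<not> (incomparable rado_le z (a,b) \<and> incomparable rado_le z (c,e))"
  shows "a = 0 \<and> b = 1 \<and> c = 1"
proof (rule ccontr)
  assume H: "\<not> ?thesis"
  have R: "(a,b) \<in> rado_set" "(c,e) \<in> rado_set" using assms by (auto simp: rado_set_def)
  have "\<exists>z\<in>rado_set. incomparable rado_le z (a,b) \<and> incomparable rado_le z (c,e)"
  proof (cases "c < b")
    case True
    show ?thesis
      by (rule bexI[of _ "(c+1, c+2)"]) (use True assms R in \<open>auto simp: inc_iff rado_set_def\<close>)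
  next
    case False
    then have cb: "c = b" using assms by auto
    show ?thesis
    proof (cases "a \<ge> 1")
      case True
      show ?thesis
        by (rule bexI[of _ "(0, c)"]) (use True cb assms R in \<open>auto simp: inc_iff rado_set_def\<close>)
    next
      case False
      then have "a = 0" by auto
      then have "c \<ge> 2" using H cb assms by auto
      then show ?thesis
        by (intro bexI[of _ "(1, c)"]) (use \<open>a = 0\<close> cb assms R in \<open>auto simp: inc_iff rado_set_def\<close>)
    qed
  qed
  then show False using no by blast
qed

lemma am2_cases:
  assumes X: "X \<in> am2_set Q2 TT"
  shows "(\<exists>x\<in>rado_set. X = {(x,0),(x,1)}) \<or> (\<exists>e. X = {((0,1),0),((1,e),0)})"
proof -
  have sub: "X \<subseteq> Q2" and c2: "card X = 2"
    and ac: "\<forall>x\<in>X. \<forall>y\<in>X. x \<noteq> y \<longrightarrow> incomparable TT x y"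
    and mx: "\<And>Y. X \<subseteq> Y \<Longrightarrow> Y \<subseteq> Q2 \<Longrightarrow> (\<forall>x\<in>Y. \<forall>y\<in>Y. x \<noteq> y \<longrightarrow> incomparable TT x y) \<Longrightarrow> Y = X"
    using X by (auto simp: am2_set_def)
  have maxw: False if w: "w \<in> Q2" "w \<notin> X" "\<forall>u\<in>X. incomparable TT w u" for w
  proof -
    have "insert w X = X"
    proof (rule mx)
      show "\<forall>x\<in>insert w X. \<forall>y\<in>insert w X. x \<noteq> y \<longrightarrow> incomparable TT x y"
        using ac w by (auto simp: incomparable_def)
    qed (use sub w in auto)
    then show False using w by auto
  qed
  obtain p q where pq0: "X = {p,q}" "p \<noteq> q" using c2 card_2_iff by metis
  obtain p' q' where pq: "X = {p',q'}" "p' \<noteq> q'" "snd p' \<le> snd q'"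
  proof (cases "snd p \<le> snd q")
    case True then show ?thesis using that pq0 by blast
  next
    case False then show ?thesis using that[of q p] pq0 by (auto simp: insert_commute)
  qed
  obtain x i where p: "p' = (x,i)" by (cases p') blast
  obtain y j where q: "q' = (y,j)" by (cases q') blast
  have xy: "x \<in> rado_set" "y \<in> rado_set" "i = 0 \<or> i = 1" "j = 0 \<or> j = 1"
    using sub pq p q by (auto simp: Q2_iff)
  have incpq: "incomparable TT (x,i) (y,j)" using ac pq p q by auto
  consider "i = 0" "j = 0" | "i = 0" "j = 1" | "i = 1" "j = 1" using xy pq(3) p q by auto
  then show ?thesis
  proof cases
    case 1
    have ixy: "incomparable rado_le x y" using incpq 1 inc_same by simp
    have no: "\<forall>z\<in>rado_set. \<not> (incomparable rado_le z x \<and> incomparable rado_le z y)"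
    proof (intro ballI notI)
      fix z assume z: "z \<in> rado_set" "incomparable rado_le z x \<and> incomparable rado_le z y"
      show False
      proof (rule maxw[of "(z,0)"])
        show "(z,0) \<in> Q2" using z by (simp add: Q2_iff)
        have "z \<noteq> x" "z \<noteq> y" using z inc_neq by blast+
        then show "(z,0) \<notin> X" using pq p q 1 by simp
        show "\<forall>u\<in>X. incomparable TT (z,0) u" using z pq p q 1 inc_same by auto
      qed
    qed
    obtain a b where x: "x = (a,b)" by force
    obtain c e where y: "y = (c,e)" by force
    have ab: "a < b" "c < e" using xy x y by (auto simp: rado_set_def)
    consider "a < c" "c \<le> b" | "c < a" "a \<le> e" using ixy inc_iff xy x y by auto
    then show ?thesis
    proof cases
      case 1
      then have "a = 0 \<and> b = 1 \<and> c = 1" using caseA[of a c b e] no ab x y by auto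
      then show ?thesis using pq p q x y \<open>i=0\<close> \<open>j=0\<close> by auto
    next
      case 2
      then have "c = 0 \<and> e = 1 \<and> a = 1" using caseA[of c a e b] no ab x y by auto
      then show ?thesis using pq p q x y \<open>i=0\<close> \<open>j=0\<close> by (auto simp: insert_commute)
    qed
  next
    case 2
    have "\<not> TT (x,0) (y,1)" using incpq 2 by (simp add: incomparable_def)
    then have yx: "rado_le y x" using L xy by blast
    show ?thesis
    proof (cases "x = y")
      case True then show ?thesis using pq p q 2 xy by auto
    next
      case False
      obtain a b where x: "x = (a,b)" by force
      obtain c d where y: "y = (c,d)" by force
      have ab: "a < b" "c < d" using xy x y by (auto simp: rado_set_def)
      define z where "z = (if c = a then (b, b+1) else (c, a))"
      have zR: "z \<in> rado_set" and zx: "incomparable rado_le z x" and yz: "rado_le y z"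
        using yx False ab unfolding z_def x y
        by (auto simp: rado_set_def rado_le_def incomparable_def)
      show ?thesis
      proof (rule FalseE, rule maxw[of "(z,0)"])
        show "(z,0) \<in> Q2" using zR by (simp add: Q2_iff)
        have "z \<noteq> x" using zx inc_neq by blast
        then show "(z,0) \<notin> X" using pq p q 2 by simp
        have "\<not> TT (z,0) (y,1)" using L zR xy yz by blast
        then have "incomparable TT (z,0) (y,1)" using two_10[of rado_set rado_le] unfolding incomparable_def by simp
        moreover have "incomparable TT (z,0) (x,0)" using zx by (simp add: inc_same)
        ultimately show "\<forall>u\<in>X. incomparable TT (z,0) u" using pq p q 2 by simp
      qed
    qed
  next
    case 3
    define z where "z = (snd x + snd y + 1, snd x + snd y + 2)"
    have zR: "z \<in> rado_set" and xz: "rado_le x z" and yz: "rado_le y z"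
      unfolding z_def by (auto simp: rado_set_def rado_le_def)
    show ?thesis
    proof (rule FalseE, rule maxw[of "(z,0)"])
      show "(z,0) \<in> Q2" using zR by (simp add: Q2_iff)
      show "(z,0) \<notin> X" using pq p q 3 by auto
      have "\<not> TT (z,0) (y,1)" "\<not> TT (z,0) (x,1)" using L zR xy yz xz by blast+
      then have "incomparable TT (z,0) (y,1)" "incomparable TT (z,0) (x,1)"
        using two_10[of rado_set rado_le] unfolding incomparable_def by simp_all
      then show "\<forall>u\<in>X. incomparable TT (z,0) u" using pq p q 3 by simp
    qed
  qed
qed


definition goodseq :: "'a set \<Rightarrow> ('a \<Rightarrow> 'a \<Rightarrow> bool) \<Rightarrow> bool" where
  "goodseq Q le \<longleftrightarrow> (\<forall>f. (\<forall>k::nat. f k \<in> Q) \<longrightarrow> (\<exists>i j::nat. i < j \<and> le (f i) (f j)))"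

lemma good_nat_sub:
  fixes g :: "nat \<Rightarrow> nat"
  assumes "infinite S"
  shows "\<exists>i\<in>S. \<exists>j\<in>S. i < j \<and> g i \<le> g j"
proof -
  have "S \<noteq> {}" using assms by auto
  then obtain i0 where "i0 \<in> S" by auto
  define v where "v = (LEAST v. \<exists>i\<in>S. g i = v)"
  have "\<exists>i\<in>S. g i = v" unfolding v_def by (rule LeastI[of _ "g i0"]) (use \<open>i0 \<in> S\<close> in auto)
  then obtain i where i: "i \<in> S" "g i = v" by auto
  obtain j where j: "j > i" "j \<in> S" using assms infinite_nat_iff_unbounded by blast
  have "v \<le> g j" unfolding v_def by (rule Least_le) (use j in auto)
  then show ?thesis using i j by auto
qed

lemma good_rado: "goodseq rado_set rado_le"
  unfolding goodseq_def
proof (intro allI impI)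
  fix f :: "nat \<Rightarrow> nat \<times> nat"
  assume f: "\<forall>k. f k \<in> rado_set"
  define N where "N = snd (f 0)"
  show "\<exists>i j. i < j \<and> rado_le (f i) (f j)"
  proof (cases "\<exists>j>0. fst (f j) > N")
    case True
    then obtain j where "j > 0" "fst (f j) > N" by auto
    then show ?thesis unfolding N_def rado_le_def by auto
  next
    case False
    define S where "S = {j::nat. j > 0}"
    have inf: "infinite S" unfolding S_def using infinite_nat_iff_unbounded by auto
    have "\<forall>j\<in>S. fst (f j) \<le> N"
    proof
      fix j assume "j \<in> S"
      show "fst (f j) \<le> N"
      proof (rule ccontr)
        assume "\<not> fst (f j) \<le> N"
        then have "\<exists>j>0. fst (f j) > N" using \<open>j \<in> S\<close> S_def by auto
        then show False using False by blast
      qed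
    qed
    then have "(fst \<circ> f) ` S \<subseteq> {..N}" by auto
    then have "finite ((fst \<circ> f) ` S)" using finite_subset by blast
    then obtain a0 where "a0 \<in> S" and inf2: "infinite {a\<in>S. (fst \<circ> f) a = (fst \<circ> f) a0}"
      using pigeonhole_infinite[OF inf] by blast
    then obtain i j where "i \<in> {a\<in>S. (fst \<circ> f) a = (fst \<circ> f) a0}"
      "j \<in> {a\<in>S. (fst \<circ> f) a = (fst \<circ> f) a0}" "i < j" "snd (f i) \<le> snd (f j)"
      using good_nat_sub[OF inf2, of "snd \<circ> f"] by auto
    then have "rado_le (f i) (f j)" unfolding rado_le_def by auto
    then show ?thesis using \<open>i < j\<close> by blast
  qed
qed

lemma good_union:
  assumes "goodseq QA le" "goodseq QB le"
  shows "goodseq (QA \<union> QB) le"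
  unfolding goodseq_def
proof (intro allI impI)
  fix f :: "nat \<Rightarrow> _" assume f: "\<forall>k. f k \<in> QA \<union> QB"
  have main: "\<exists>i j. i < j \<and> le (f i) (f j)" if S: "infinite S" "\<forall>k\<in>S. f k \<in> Q" "goodseq Q le" for S Q
  proof -
    define h where "h = enumerate S"
    have sm: "strict_mono h" unfolding h_def by (rule strict_mono_enumerate) fact
    have "\<forall>k. (f \<circ> h) k \<in> Q" using S enumerate_in_set unfolding h_def by auto
    then have G: "\<exists>i j. i < j \<and> le ((f \<circ> h) i) ((f \<circ> h) j)"
      by (rule mp[OF S(3)[unfolded goodseq_def, THEN spec[of _ "f \<circ> h"]]])
    then obtain i j where "i < j" "le (f (h i)) (f (h j))" by auto
    then show ?thesis using sm by (metis strict_mono_less)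
  qed
  show "\<exists>i j. i < j \<and> le (f i) (f j)"
  proof (cases "finite {k. f k \<in> QA}")
    case False
    then show ?thesis by (rule main[of "{k. f k \<in> QA}" QA]) (use assms in auto)
  next
    case True
    have "- {k. f k \<in> QA} \<subseteq> {k. f k \<in> QB}" using f by auto
    moreover have "infinite (- {k. f k \<in> QA})" using True
      by (simp add: Finite_Set.finite_compl)
    ultimately have "infinite {k. f k \<in> QB}" using finite_subset by blast
    then show ?thesis by (rule main[of "{k. f k \<in> QB}" QB]) (use assms in auto)
  qed
qed

lemma good_image:
  assumes "goodseq P le" "\<And>x y. x \<in> P \<Longrightarrow> y \<in> P \<Longrightarrow> le x y \<Longrightarrow> le' (c x) (c y)"
  shows "goodseq (c ` P) le'"
  unfolding goodseq_def
proof (intro allI impI)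
  fix f :: "nat \<Rightarrow> _" assume f: "\<forall>k. f k \<in> c ` P"
  then have "\<forall>k. \<exists>x. x \<in> P \<and> f k = c x" by blast
  then obtain g where g: "\<And>k. g k \<in> P" "\<And>k. f k = c (g k)" by metis
  then obtain i j where "i < j" "le (g i) (g j)" using assms(1) unfolding goodseq_def by blast
  then show "\<exists>i j. i < j \<and> le' (f i) (f j)" using assms(2) g by metis
qed

lemma good_mono: "Q \<subseteq> Q' \<Longrightarrow> goodseq Q' le \<Longrightarrow> goodseq Q le"
  unfolding goodseq_def by blast

lemma good_nat: "goodseq (UNIV::nat set) (\<le>)"
  unfolding goodseq_def
proof (intro allI impI)
  fix f :: "nat \<Rightarrow> nat"
  show "\<exists>i j. i < j \<and> f i \<le> f j" using good_nat_sub[of UNIV f] by auto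
qed

abbreviation "DD \<equiv> dom_le TT"

lemma good_am2: "goodseq (am2_set Q2 TT) DD"
proof (rule good_mono)
  show "am2_set Q2 TT \<subseteq> (\<lambda>x. {(x,0),(x,1)}) ` rado_set \<union> (\<lambda>e. {((0,1),0),((1,e),0)}) ` UNIV"
  proof
    fix X assume "X \<in> am2_set Q2 TT"
    from am2_cases[OF this]
    show "X \<in> (\<lambda>x. {(x,0),(x,1)}) ` rado_set \<union> (\<lambda>e. {((0,1),0),((1,e),0)}) ` UNIV"
    proof
      assume "\<exists>x\<in>rado_set. X = {(x, 0), (x, 1)}"
      then obtain x where "x \<in> rado_set" "X = {(x, 0), (x, 1)}" by blast
      then show ?thesis by (intro UnI1 image_eqI)
    next
      assume "\<exists>e. X = {((0,1),0),((1,e),0)}"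
      then obtain e where "X = {((0,1),0),((1,e),0)}" by blast
      then show ?thesis by (intro UnI2 image_eqI) auto
    qed
  qed
  show "goodseq ((\<lambda>x. {(x,0),(x,1)}) ` rado_set \<union> (\<lambda>e. {((0,1),0),((1,e),0)}) ` UNIV) DD"
  proof (rule good_union)
    show "goodseq ((\<lambda>x. {(x,0),(x,1)}) ` rado_set) DD"
      by (rule good_image[OF good_rado]) (simp add: dom_le_def two_same)
    show "goodseq ((\<lambda>e. {((0,1),0),((1,e),0)}) ` UNIV) DD"
      by (rule good_image[OF good_nat]) (simp add: dom_le_def two_same rado_le_def)
  qed
qed

lemma two_10': "\<not> two_le P le (x, Suc 0) (y,0)"
  by (auto simp: two_le_def)

lemma TT_trans: assumes "p \<in> Q2" "q \<in> Q2" "r \<in> Q2" "TT p q" "TT q r" shows "TT p r"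
proof -
  obtain x i where p: "p = (x,i)" by (cases p) blast
  obtain y j where q: "q = (y,j)" by (cases q) blast
  obtain z k where r: "r = (z,k)" by (cases r) blast
  have R: "x \<in> rado_set" "y \<in> rado_set" "z \<in> rado_set" "i = 0 \<or> i = 1" "j = 0 \<or> j = 1" "k = 0 \<or> k = 1"
    using assms p q r by (auto simp: Q2_iff)
  show ?thesis
  proof (cases "j = 0")
    case j0: True
    have "i \<noteq> 1"
    proof
      assume "i = 1"
      then have "TT (x,1) (y,0)" using assms(4) p q j0 by simp
      then show False using two_10[of rado_set rado_le x y] by simp
    qed
    then have i0: "i = 0" "rado_le x y" using R assms(4) p q j0 by (auto simp: two_same)
    show ?thesis
    proof (cases "k = 0")
      case True
      have "rado_le y z" using assms(5) q r j0 True by (simp add: two_same)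
      then have "rado_le x z" using rado_trans[OF R(2) i0(2)] by blast
      then show ?thesis using p r i0(1) True by (simp add: two_same)
    next
      case False
      then have "k = 1" using R by auto
      then have "\<not> rado_le z y" using assms(5) q r j0 L[OF R(2) R(3)] by simp
      then have "\<not> rado_le z x" using rado_trans[OF R(1) _ i0(2)] by blast
      then show ?thesis using p r i0(1) \<open>k=1\<close> L[OF R(1) R(3)] by simp
    qed
  next
    case False
    then have j1: "j = 1" using R by auto
    have "k \<noteq> 0"
    proof
      assume "k = 0"
      then have "TT (y,1) (z,0)" using assms(5) q r j1 by simp
      then show False using two_10[of rado_set rado_le y z] by simp
    qed
    then have k1: "k = 1" "rado_le y z" using R assms(5) q r j1 by (auto simp: two_same)
    show ?thesis
    proof (cases "i = 0")
      case True
      then have "\<not> rado_le y x" using assms(4) p q j1 L[OF R(1) R(2)] by simp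
      then have "\<not> rado_le z x" using rado_trans[OF R(3) k1(2)] by blast
      then show ?thesis using p r True k1(1) L[OF R(1) R(3)] by simp
    next
      case False
      then have "i = 1" using R by auto
      then have "rado_le x y" using assms(4) p q j1 by (simp add: two_same)
      then have "rado_le x z" using rado_trans[OF R(2) _ k1(2)] by blast
      then show ?thesis using p r \<open>i = 1\<close> k1(1) by (simp add: two_same)
    qed
  qed
qed

lemma DD_trans: assumes "X \<subseteq> Q2" "Y \<subseteq> Q2" "Z \<subseteq> Q2" "DD X Y" "DD Y Z" shows "DD X Z"
  unfolding dom_le_def
proof
  fix x assume "x \<in> X"
  then obtain y where "y \<in> Y" "TT x y" using assms(4) unfolding dom_le_def by blast
  then obtain z where "z \<in> Z" "TT y z" using assms(5) unfolding dom_le_def by blast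
  moreover have "TT x z"
    by (rule TT_trans[of x y z]) (use assms \<open>x \<in> X\<close> \<open>y \<in> Y\<close> \<open>TT x y\<close> \<open>z \<in> Z\<close> \<open>TT y z\<close> in auto)
  ultimately show "\<exists>z\<in>Z. TT x z" by blast
qed

lemma TT_refl: "TT p p" by (cases p) (simp add: two_same rado_refl)

lemma DD_refl: "X \<subseteq> Q2 \<Longrightarrow> DD X X"
  unfolding dom_le_def using TT_refl by blast

lemma wqo_part: "wqo_on (am2_set Q2 TT) DD"
  unfolding wqo_on_def
proof (intro conjI notI)
  have sub: "X \<subseteq> Q2" if "X \<in> am2_set Q2 TT" for X using that by (auto simp: am2_set_def)
  {
    assume "\<exists>s. \<forall>n. s n \<in> am2_set Q2 TT \<and> DD (s (Suc n)) (s n) \<and> \<not> DD (s n) (s (Suc n))"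
    then obtain s where s: "\<And>n. s n \<in> am2_set Q2 TT" "\<And>n. DD (s (Suc n)) (s n)"
      "\<And>n. \<not> DD (s n) (s (Suc n))" by blast
    have "\<forall>k. s k \<in> am2_set Q2 TT" using s(1) by blast
    then have G: "\<exists>i j. i < j \<and> DD (s i) (s j)"
      by (rule mp[OF good_am2[unfolded goodseq_def, THEN spec[of _ s]]])
    then obtain i j where ij: "i < j" "DD (s i) (s j)" by blast
    have dd: "DD (s (Suc i + d)) (s (Suc i))" for d
    proof (induction d)
      case 0 show ?case using DD_refl sub s(1) by simp
    next
      case (Suc d)
      have e: "Suc i + Suc d = Suc (Suc i + d)" by simp
      show ?case unfolding e
        by (rule DD_trans[of "s (Suc (Suc i + d))" "s (Suc i + d)" "s (Suc i)"])
           (use sub[OF s(1)] s(2) Suc.IH in auto)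
    qed
    have "j = Suc i + (j - Suc i)" using ij by simp
    then have "DD (s j) (s (Suc i))" using dd by metis
    then have "DD (s i) (s (Suc i))" using DD_trans[OF sub[OF s(1)] sub[OF s(1)] sub[OF s(1)] ij(2)] by blast
    then show False using s(3) by blast
  }
  {
    assume "\<exists>A. A \<subseteq> am2_set Q2 TT \<and> infinite A \<and> (\<forall>x\<in>A. \<forall>y\<in>A. x \<noteq> y \<longrightarrow> incomparable DD x y)"
    then obtain A where A: "A \<subseteq> am2_set Q2 TT" "infinite A" "\<forall>x\<in>A. \<forall>y\<in>A. x \<noteq> y \<longrightarrow> incomparable DD x y"
      by blast
    from A(2)[unfolded infinite_iff_countable_subset]
    obtain f :: "nat \<Rightarrow> _" where f: "inj f" "range f \<subseteq> A" by blast
    have "\<forall>k. f k \<in> am2_set Q2 TT" using f(2) A(1) by auto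
    then have G: "\<exists>i j. i < j \<and> DD (f i) (f j)"
      by (rule mp[OF good_am2[unfolded goodseq_def, THEN spec[of _ f]]])
    then obtain i j where ij: "i < j" "DD (f i) (f j)" by blast
    have "f i \<noteq> f j" using f(1) ij(1) by (metis inj_eq less_irrefl)
    moreover have "f i \<in> A" "f j \<in> A" using f(2) by auto
    ultimately have "incomparable DD (f i) (f j)" using A(3) by blast
    then show False using ij(2) unfolding incomparable_def by simp
  }
qed


lemma card2_E:
  fixes s :: "nat set"
  assumes "card s = 2"
  obtains i j where "s = {i,j}" "i < j"
proof -
  obtain a b where ab: "s = {a,b}" "a \<noteq> b" using assms card_2_iff by metis
  show ?thesis
  proof (cases "a < b")
    case True then show ?thesis using that ab by blast
  next
    case False then have "b < a" using ab by auto
    then show ?thesis using that[of b a] ab by (auto simp: insert_commute)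
  qed
qed

lemma MinMax2: "(i::nat) < j \<Longrightarrow> Min {i,j} = i \<and> Max {i,j} = j"
  by auto

lemma sorted2: "(i::nat) < j \<Longrightarrow> sorted_list_of_set {i,j} = [i,j]"
  by simp

lemma C_in: assumes "x \<in> rado_set" shows "{(x,0),(x,1)} \<in> am2_set Q2 TT"
proof -
  have nle: "\<not> TT (x,0) (x,1)" using L[OF assms assms] rado_refl by simp
  have ac: "incomparable TT (x,0) (x,1)" using nle two_10[of rado_set rado_le x x]
    unfolding incomparable_def by simp
  have mx: "Y = {(x,0),(x,1)}" if Y: "{(x,0),(x,1)} \<subseteq> Y" "Y \<subseteq> Q2"
    "\<forall>u\<in>Y. \<forall>v\<in>Y. u \<noteq> v \<longrightarrow> incomparable TT u v" for Y
  proof (rule ccontr)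
    assume "Y \<noteq> {(x,0),(x,1)}"
    then obtain w where w: "w \<in> Y" "w \<notin> {(x,0),(x,1)}" using Y(1) by blast
    obtain z k where wz: "w = (z,k)" by (cases w) blast
    have zk: "z \<in> rado_set" "k = 0 \<or> k = 1" using w wz Y(2) by (auto simp: Q2_iff)
    have x0: "(x,0) \<in> Y" and x1: "(x,1) \<in> Y" using Y(1) by auto
    have n0: "w \<noteq> (x,0)" and n1: "w \<noteq> (x,1)" using w(2) by auto
    have i0: "incomparable TT (z,k) (x,0)" using Y(3) w(1) x0 n0 unfolding wz by blast
    have i1: "incomparable TT (z,k) (x,1)" using Y(3) w(1) x1 n1 unfolding wz by blast
    show False
    proof (cases "k = 0")
      case True
      then have "incomparable rado_le z x" using i0 inc_same by simp
      then have "\<exists>x'\<in>rado_set. \<exists>y'\<in>rado_set. incomparable rado_le x' y' \<and> rado_le z x' \<and> rado_le y' x"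
        using zk(1) assms rado_refl[of z] rado_refl[of x] by blast
      then have "TT (z,0) (x,1)" unfolding two_le_def by simp
      then show False using i1 True unfolding incomparable_def by simp
    next
      case False
      then have k1: "k = 1" using zk by auto
      then have "incomparable rado_le z x" using i1 inc_same by simp
      then have "incomparable rado_le x z" unfolding incomparable_def by auto
      then have "\<exists>x'\<in>rado_set. \<exists>y'\<in>rado_set. incomparable rado_le x' y' \<and> rado_le x x' \<and> rado_le y' z"
        using zk(1) assms rado_refl[of z] rado_refl[of x] by blast
      then have "TT (x,0) (z,1)" unfolding two_le_def by simp
      then show False using i0 k1 unfolding incomparable_def by simp
    qed
  qed
  have "{(x,0),(x,1)} \<subseteq> Q2" using assms by (simp add: Q2_iff)
  moreover have "card {(x,0::nat),(x,1)} = 2" by simp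
  moreover have "\<forall>u\<in>{(x,0),(x,1)}. \<forall>v\<in>{(x,0),(x,1)}. u \<noteq> v \<longrightarrow> incomparable TT u v"
  proof (intro ballI impI)
    fix u v :: "(nat \<times> nat) \<times> nat" assume "u \<in> {(x,0),(x,1)}" "v \<in> {(x,0),(x,1)}" "u \<noteq> v"
    then have "(u = (x,0) \<and> v = (x,1)) \<or> (u = (x,1) \<and> v = (x,0))" by auto
    then show "incomparable TT u v" using ac unfolding incomparable_def by auto
  qed
  moreover have "\<forall>Y. {(x,0),(x,1)} \<subseteq> Y \<and> Y \<subseteq> Q2 \<and> (\<forall>u\<in>Y. \<forall>v\<in>Y. u \<noteq> v \<longrightarrow> incomparable TT u v)
      \<longrightarrow> Y = {(x,0),(x,1)}"
  proof (intro allI impI)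
    fix Y assume H: "{(x,0),(x,1)} \<subseteq> Y \<and> Y \<subseteq> Q2 \<and> (\<forall>u\<in>Y. \<forall>v\<in>Y. u \<noteq> v \<longrightarrow> incomparable TT u v)"
    then show "Y = {(x,0),(x,1)}" by (elim conjE) (rule mx)
  qed
  ultimately show ?thesis unfolding am2_set_def mem_Collect_eq by blast
qed

definition BB :: "nat set set" where "BB = {s. card s = 2}"

lemma barrier_BB: "barrier BB"
  unfolding barrier_def
proof (intro conjI ballI allI impI)
  have "inj (\<lambda>n::nat. {0, Suc n})" by (auto simp: inj_def)
  moreover have "range (\<lambda>n::nat. {0, Suc n}) \<subseteq> BB" by (auto simp: BB_def)
  moreover have "infinite (range (\<lambda>n::nat. {0, Suc n}))" using range_inj_infinite calculation(1) by blast
  ultimately show "infinite BB" using infinite_super by blast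
next
  fix s assume "s \<in> BB" then have "card s = 2" unfolding BB_def by simp
  then show "finite s" by (intro card_ge_0_finite) simp
next
  fix s t assume "s \<in> BB" "t \<in> BB"
  then have c: "card s = 2" "card t = 2" unfolding BB_def by simp_all
  show "\<not> s \<subset> t"
  proof
    assume "s \<subset> t"
    moreover have "finite t" using c by (intro card_ge_0_finite) simp
    ultimately have "card s < card t" using psubset_card_mono by blast
    then show False using c by simp
  qed
next
  fix X :: "nat set" assume X: "X \<subseteq> \<Union> BB \<and> infinite X"
  then have "X \<noteq> {}" using finite.emptyI by blast
  define i where "i = (LEAST x. x \<in> X)"
  obtain x0 where "x0 \<in> X" using \<open>X \<noteq> {}\<close> by blast
  then have iX: "i \<in> X" unfolding i_def by (rule LeastI)
  have ile: "\<And>x. x \<in> X \<Longrightarrow> i \<le> x" unfolding i_def by (rule Least_le)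
  have "infinite (X - {i})" using X by simp
  then have "X - {i} \<noteq> {}" by (metis finite.emptyI)
  define j where "j = (LEAST x. x \<in> X - {i})"
  obtain x1 where "x1 \<in> X - {i}" using \<open>X - {i} \<noteq> {}\<close> by blast
  then have jX: "j \<in> X - {i}" unfolding j_def by (rule LeastI)
  have jle: "\<And>x. x \<in> X - {i} \<Longrightarrow> j \<le> x" unfolding j_def by (rule Least_le)
  have "i \<le> j" "j \<noteq> i" using jX ile by auto
  then have ij: "i < j" by simp
  show "\<exists>s\<in>BB. s \<noteq> {} \<and> init_seg s X"
  proof (intro bexI conjI)
    show "{i,j} \<in> BB" using ij by (simp add: BB_def)
    show "{i,j} \<noteq> {}" by simp
    show "init_seg {i,j} X" unfolding init_seg_def
    proof (intro conjI ballI impI)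
      show "{i,j} \<subseteq> X" using iX jX by auto
    next
      fix y x assume "y \<in> {i,j}" "x \<in> X" "x \<le> y"
      show "x \<in> {i,j}"
      proof (cases "x = i")
        case False
        then have "j \<le> x" using jle \<open>x \<in> X\<close> by simp
        moreover have "x \<le> j" using \<open>y \<in> {i,j}\<close> \<open>x \<le> y\<close> ij by auto
        ultimately show ?thesis by simp
      qed simp
    qed
  qed
qed

lemma otype_BB: "otype_le_omega2 BB"
  unfolding otype_le_omega2_def
proof (intro exI[of _ "\<lambda>s. (Min s, Max s)"] ballI impI)
  fix s t assume s: "s \<in> BB" and t: "t \<in> BB" and l: "lex_less s t"
  obtain i j where sij: "s = {i,j}" "i < j" using s unfolding BB_def by (blast elim: card2_E)
  obtain k m where tkm: "t = {k,m}" "k < m" using t unfolding BB_def by (blast elim: card2_E)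
  have "([i,j],[k,m]) \<in> lexord {(a, b). a < b}" using l sij tkm unfolding lex_less_def by simp
  then have "i < k \<or> (i = k \<and> j < m)" by (simp add: lexord_cons_cons)
  moreover have "Min s = i" "Max s = j" "Min t = k" "Max t = m"
    using MinMax2[OF sij(2)] MinMax2[OF tkm(2)] sij(1) tkm(1) by simp_all
  ultimately show "omega2_less (Min s, Max s) (Min t, Max t)"
    unfolding omega2_less_def by simp
qed

definition FF :: "nat set \<Rightarrow> ((nat \<times> nat) \<times> nat) set" where
  "FF s = {((Min s, Max s),0),((Min s, Max s),1)}"

lemma FF_in: assumes "s \<in> BB" shows "FF s \<in> am2_set Q2 TT"
proof -
  obtain i j where sij: "s = {i,j}" "i < j" using assms unfolding BB_def by (blast elim: card2_E)
  have "Min s = i" "Max s = j" using MinMax2[OF sij(2)] sij(1) by simp_all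
  then have "(Min s, Max s) \<in> rado_set" using sij by (simp add: rado_set_def)
  then show ?thesis unfolding FF_def by (rule C_in)
qed

lemma not_good: "\<not> good DD BB FF"
  unfolding good_def
proof (intro notI, elim bexE conjE)
  fix s t assume s: "s \<in> BB" and t: "t \<in> BB" and tri: "tri_less s t" and d: "DD (FF s) (FF t)"
  obtain i j where sij: "s = {i,j}" "i < j" using s unfolding BB_def by (blast elim: card2_E)
  obtain r where r: "finite r" "init_seg s r" "t = r - {Min r}" using tri unfolding tri_less_def by blast
  have sub: "s \<subseteq> r" and seg: "\<And>y x. y \<in> s \<Longrightarrow> x \<in> r \<Longrightarrow> x \<le> y \<Longrightarrow> x \<in> s"
    using r(2) unfolding init_seg_def by auto
  have ir: "i \<in> r" "j \<in> r" using sub sij by auto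
  have "Min r = i"
  proof (rule antisym)
    show "Min r \<le> i" using ir r(1) by simp
    have "Min r \<in> r" using ir r(1) by (metis Min_in empty_iff)
    moreover have "Min r \<le> i" using ir r(1) by simp
    ultimately have "Min r \<in> s" using seg[of i "Min r"] sij by auto
    then show "i \<le> Min r" using sij by auto
  qed
  then have it: "i \<notin> t" "j \<in> t" using r(3) ir sij by auto
  have ft: "finite t" using r by auto
  have mt: "Min t \<noteq> i" "Min t \<le> j" using it ft by (metis Min_in empty_iff, simp)
  have "((Min s, Max s), 1) \<in> FF s" unfolding FF_def by simp
  then obtain y where y: "y \<in> FF t" "TT ((Min s, Max s), 1) y" using d unfolding dom_le_def by blast
  have "y = ((Min t, Max t), 0) \<or> y = ((Min t, Max t), 1)" using y(1) unfolding FF_def by auto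
  then show False
  proof
    assume "y = ((Min t, Max t), 0)"
    then show False using y(2) two_10[of rado_set rado_le] by simp
  next
    assume "y = ((Min t, Max t), 1)"
    then have "TT ((Min s, Max s), 1) ((Min t, Max t), 1)" using y(2) by simp
    then have "rado_le (Min s, Max s) (Min t, Max t)" by (simp only: two_same)
    then show False using sij mt unfolding rado_le_def by auto
  qed
qed

theorem lemma6p4:
  shows "wqo_on (am2_set (two_set rado_set) (two_le rado_set rado_le))
                (dom_le (two_le rado_set rado_le))
       \<and> \<not> omega2_bqo (am2_set (two_set rado_set) (two_le rado_set rado_le))
                (dom_le (two_le rado_set rado_le))"
proof
  show "wqo_on (am2_set (two_set rado_set) (two_le rado_set rado_le))
                (dom_le (two_le rado_set rado_le))" by (rule wqo_part)
  show "\<not> omega2_bqo (am2_set (two_set rado_set) (two_le rado_set rado_le))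
                (dom_le (two_le rado_set rado_le))"
    unfolding omega2_bqo_def
  proof
    assume H: "\<forall>B f. barrier B \<and> otype_le_omega2 B \<and> (\<forall>s\<in>B. f s \<in> am2_set (two_set rado_set) (two_le rado_set rado_le))
       \<longrightarrow> good (dom_le (two_le rado_set rado_le)) B f"
    have P: "barrier BB \<and> otype_le_omega2 BB \<and> (\<forall>s\<in>BB. FF s \<in> am2_set (two_set rado_set) (two_le rado_set rado_le))"
      using barrier_BB otype_BB FF_in by blast
    have "good (dom_le (two_le rado_set rado_le)) BB FF"
      by (rule H[THEN spec[of _ BB], THEN spec[of _ FF], THEN mp, OF P])
    then show False using not_good by blast
  qed
qed

end
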